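(* Let $\alpha,\beta,\gamma\in\mathbb{C}$ and $k\in\mathbb{N}$, and consider the difference equation $$z_{n+1}=\frac{\alpha+\beta z_{n-k}}{\gamma-z_n},\qquad n=0,1,2,\ldots,$$ with complex initial conditions $z_{-k},\dots,z_{-1},z_0$. Let $s=\sqrt{(\beta-\gamma)^2-4\alpha}=\sqrt{-4\alpha+\beta^2-2\beta\gamma+\gamma^2}$ and let $\bar z_2=\frac{1}{2}\left(s-\beta+\gamma\right)$, which is a fixed point of the equation. If $$\left|\frac{2\beta}{-s+\beta+\gamma}\right|+\left|\frac{\gamma\left(s-\beta+\gamma\right)-2\alpha}{2(\alpha+\beta\gamma)}\right|<1,$$ then $\bar z_2$ is locally asymptotically stable.
   Context: Here $\sqrt{\cdot}$ denotes a fixed complex square root, used consistently in all occurrences. A fixed point $\bar z$ of $z_{n+1}=f(z_n,\dots,z_{n-k})$ is a point with $\bar z=f(\bar z,\dots,\bar z)$. It is locally asymptotically stable if for every $\epsilon>0$ there is $\delta>0$ such that $|z_{-k}-\bar z|+\dots+|z_0-\bar z|<\delta$ implies $|z_n-\bar z|<\epsilon$ for all $n\ge -k$ (and solutions converge to $\bar z$), as determined via the linearization of the equation at $\bar z$. *)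

theory Defs
  imports "HOL-Analysis.Analysis"
begin

text \<open>A solution of z(n+1) = (alpha + beta z(n-k)) / (gamma - z(n)), n = 0,1,2,...,
  is encoded as x :: nat => complex with x i = z(i - k); so x 0, ..., x k are the
  initial conditions z(-k), ..., z(0), and the recurrence reads
  x (n + k + 1) = (alpha + beta * x n) / (gamma - x (n + k)).\<close>

definition is_solution :: "complex \<Rightarrow> complex \<Rightarrow> complex \<Rightarrow> nat \<Rightarrow> (nat \<Rightarrow> complex) \<Rightarrow> bool" where
  "is_solution \<alpha> \<beta> \<gamma> k x \<longleftrightarrow>
     (\<forall>n. x (n + k + 1) = (\<alpha> + \<beta> * x n) / (\<gamma> - x (n + k)))"

definition is_fixed_point :: "complex \<Rightarrow> complex \<Rightarrow> complex \<Rightarrow> complex \<Rightarrow> bool" where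
  "is_fixed_point \<alpha> \<beta> \<gamma> zb \<longleftrightarrow> zb = (\<alpha> + \<beta> * zb) / (\<gamma> - zb)"

definition locally_asymptotically_stable ::
    "complex \<Rightarrow> complex \<Rightarrow> complex \<Rightarrow> nat \<Rightarrow> complex \<Rightarrow> bool" where
  "locally_asymptotically_stable \<alpha> \<beta> \<gamma> k zb \<longleftrightarrow>
     (\<forall>\<epsilon>>0. \<exists>\<delta>>0. \<forall>x. is_solution \<alpha> \<beta> \<gamma> k x \<and> (\<Sum>i\<le>k. norm (x i - zb)) < \<delta>
          \<longrightarrow> (\<forall>n. norm (x n - zb) < \<epsilon>)) \<and>
     (\<exists>\<eta>>0. \<forall>x. is_solution \<alpha> \<beta> \<gamma> k x \<and> (\<Sum>i\<le>k. norm (x i - zb)) < \<eta>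
          \<longrightarrow> x \<longlonglongrightarrow> zb)"

end

theory Submission
  imports Defs
begin

lemma decay:
  fixes x :: "nat \<Rightarrow> complex" and \<alpha> \<beta> \<gamma> z D :: complex and r c B :: real
  assumes D: "D = \<gamma> - z" and lt: "norm \<beta> + norm z < norm D"
    and fp: "z * (\<gamma> - z) = \<alpha> + \<beta> * z"
    and sol: "is_solution \<alpha> \<beta> \<gamma> k x"
    and r: "r = (norm D - (norm \<beta> + norm z)) / 2"
    and c: "c = (norm \<beta> + norm z) / (norm D - r)"
    and B: "(\<Sum>i\<le>k. norm (x i - z)) = B" "B < r"
  shows "norm (x n - z) \<le> B * c ^ (n div (k+1))"
proof (induction n rule: less_induct)
  case (less n)
  have rpos: "r > 0" using lt r by simp
  have Dr': "norm D - r = (norm D + (norm \<beta> + norm z)) / 2" using r by (simp add: field_simps)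
  have "0 < norm D + (norm \<beta> + norm z)" using lt norm_ge_zero[of \<beta>] norm_ge_zero[of z] by linarith
  hence Dr: "norm D - r > 0" unfolding Dr' by simp
  have c0: "c \<ge> 0" using c Dr by simp
  have nl: "norm \<beta> + norm z < norm D - r" unfolding Dr' using lt by (simp add: field_simps)
  have c1: "c \<le> 1" using c Dr nl by (simp add: divide_le_eq_1)
  have B0: "B \<ge> 0" using B(1)[symmetric] by (simp add: sum_nonneg)
  show ?case
  proof (cases "n \<le> k")
    case True
    have "norm (x n - z) \<le> (\<Sum>i\<le>k. norm (x i - z))"
      by (rule member_le_sum) (use True in auto)
    moreover have "n div (k+1) = 0" using True by simp
    ultimately show ?thesis using B by simp
  next
    case False
    define m where "m = n - k - 1"
    have n: "n = m + k + 1" using False m_def by simp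
    have n': "n = m + (k+1)" using n by simp
    have dm: "n div (k+1) = Suc (m div (k+1))" unfolding n' by (simp only: div_add_self2[of "k+1" m] add_eq_0_iff_both_eq_0 one_neq_zero simp_thms Suc_eq_plus1)
    define T where "T = B * c ^ (m div (k+1))"
    have T0: "T \<ge> 0" using T_def B0 c0 by simp
    have TB: "T \<le> B" unfolding T_def using B0 c0 c1
      by (simp add: mult_left_le power_le_one)
    have h1: "norm (x m - z) \<le> T" using less.IH[of m] n T_def by simp
    have "norm (x (m+k) - z) \<le> B * c ^ ((m+k) div (k+1))" using less.IH[of "m+k"] n by simp
    also have "\<dots> \<le> T" unfolding T_def
      by (intro mult_left_mono power_decreasing div_le_mono) (use B0 c0 c1 in auto)
    finally have h2: "norm (x (m+k) - z) \<le> T" .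
    define e where "e = x (m+k) - z"
    have ne: "norm e \<le> r" using h2 TB B e_def by simp
    have "norm (D - e) \<ge> norm D - norm e" by (metis norm_triangle_ineq2)
    hence nde: "norm (D - e) \<ge> norm D - r" using ne by simp
    hence de0: "D - e \<noteq> 0" using Dr by auto
    have den: "\<gamma> - x (m+k) = D - e" using D e_def by simp
    have rec0: "x (m+k+1) = (\<alpha> + \<beta> * x m) / (\<gamma> - x (m+k))"
      using sol unfolding is_solution_def by blast
    have rec: "x n = (\<alpha> + \<beta> * x m) / (D - e)" using rec0 den n by simp
    have al: "\<alpha> = z * (\<gamma> - z) - \<beta> * z" using fp by simp
    have num: "\<alpha> + \<beta> * x m - z * (D - e) = \<beta> * (x m - z) + z * e"
      unfolding al D e_def by (simp add: algebra_simps)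
    have "x n - z = (\<alpha> + \<beta> * x m) / (D - e) - z * (D - e) / (D - e)"
      using rec de0 by simp
    also have "\<dots> = (\<beta> * (x m - z) + z * e) / (D - e)"
      by (simp only: diff_divide_distrib[symmetric] num)
    finally have err: "x n - z = (\<beta> * (x m - z) + z * e) / (D - e)" .
    have "norm (\<beta> * (x m - z) + z * e) \<le> norm (\<beta> * (x m - z)) + norm (z * e)"
      by (rule norm_triangle_ineq)
    also have "\<dots> = norm \<beta> * norm (x m - z) + norm z * norm e" by (simp add: norm_mult)
    also have "\<dots> \<le> norm \<beta> * T + norm z * T"
      using h1 h2 e_def by (intro add_mono mult_left_mono) auto
    finally have nn: "norm (\<beta> * (x m - z) + z * e) \<le> norm \<beta> * T + norm z * T" .
    have "norm (x n - z) = norm (\<beta> * (x m - z) + z * e) / norm (D - e)"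
      unfolding err by (simp add: norm_divide)
    also have "\<dots> \<le> norm (\<beta> * (x m - z) + z * e) / (norm D - r)"
      using nde Dr by (intro divide_left_mono) (auto intro!: mult_pos_pos)
    also have "\<dots> \<le> (norm \<beta> * T + norm z * T) / (norm D - r)"
      by (rule divide_right_mono) (use nn Dr in auto)
    also have "\<dots> = c * T" unfolding c by (simp add: distrib_right[symmetric])
    also have "\<dots> = B * c ^ (n div (k+1))" using dm T_def by simp
    finally show ?thesis .
  qed
qed

theorem theorem2p2:
  fixes \<alpha> \<beta> \<gamma> s :: complex and k :: nat
  assumes hs: "s\<^sup>2 = (\<beta> - \<gamma>)\<^sup>2 - 4 * \<alpha>"
    and hden1: "- s + \<beta> + \<gamma> \<noteq> 0"
    and hden2: "\<alpha> + \<beta> * \<gamma> \<noteq> 0"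
    and hcond: "norm (2 * \<beta> / (- s + \<beta> + \<gamma>))
              + norm ((\<gamma> * (s - \<beta> + \<gamma>) - 2 * \<alpha>) / (2 * (\<alpha> + \<beta> * \<gamma>))) < 1"
  shows "is_fixed_point \<alpha> \<beta> \<gamma> ((s - \<beta> + \<gamma>) / 2)
       \<and> locally_asymptotically_stable \<alpha> \<beta> \<gamma> k ((s - \<beta> + \<gamma>) / 2)"
proof -
  define z where "z = (s - \<beta> + \<gamma>) / 2"
  define D where "D = \<gamma> - z"
  have DD: "D = (- s + \<beta> + \<gamma>) / 2" unfolding D_def z_def by (simp add: field_simps)
  have D0: "D \<noteq> 0" using DD hden1 by auto
  have fp: "z * (\<gamma> - z) = \<alpha> + \<beta> * z"
    unfolding z_def using hs by (simp add: field_simps power2_eq_square) algebra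
  have isfp: "is_fixed_point \<alpha> \<beta> \<gamma> z"
    unfolding is_fixed_point_def using fp D0 D_def by (simp add: field_simps)
  have t1: "2 * \<beta> / (- s + \<beta> + \<gamma>) = \<beta> / D" proof -
    have "- s + \<beta> + \<gamma> = 2 * D" using DD by (simp add: mult.commute)
    thus ?thesis using D0 by simp
  qed
  have t2: "(\<gamma> * (s - \<beta> + \<gamma>) - 2 * \<alpha>) / (2 * (\<alpha> + \<beta> * \<gamma>)) = z / D"
  proof -
    have "(\<gamma> * z - \<alpha>) * D = z * (\<alpha> + \<beta> * \<gamma>)"
      using fp unfolding D_def by algebra
    moreover have "\<gamma> * (s - \<beta> + \<gamma>) - 2 * \<alpha> = 2 * (\<gamma> * z - \<alpha>)" unfolding z_def by (simp add: field_simps)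
    ultimately have "(\<gamma> * (s - \<beta> + \<gamma>) - 2 * \<alpha>) / (2 * (\<alpha> + \<beta> * \<gamma>))
        = (\<gamma> * z - \<alpha>) / (\<alpha> + \<beta> * \<gamma>)" by (simp only: mult_divide_mult_cancel_left_if) simp
    also have "\<dots> = z / D" using D0 hden2 \<open>(\<gamma> * z - \<alpha>) * D = z * (\<alpha> + \<beta> * \<gamma>)\<close>
      by (simp add: frac_eq_eq)
    finally show ?thesis .
  qed
  have lt: "norm \<beta> + norm z < norm D"
    using hcond D0 unfolding t1 t2 norm_divide by (simp add: field_simps)
  define r where "r = (norm D - (norm \<beta> + norm z)) / 2"
  define c where "c = (norm \<beta> + norm z) / (norm D - r)"
  have rpos: "r > 0" using lt r_def by simp
  have Dr': "norm D - r = (norm D + (norm \<beta> + norm z)) / 2" using r_def by (simp add: field_simps)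
  have "0 < norm D + (norm \<beta> + norm z)" using lt norm_ge_zero[of \<beta>] norm_ge_zero[of z] by linarith
  hence Dr: "norm D - r > 0" unfolding Dr' by simp
  have nl: "norm \<beta> + norm z < norm D - r" unfolding Dr' using lt by (simp add: field_simps)
  have c0: "c \<ge> 0" using c_def Dr by simp
  have c1: "c < 1" using c_def Dr nl by (simp add: divide_less_eq_1)
  have bound: "norm (x n - z) \<le> B * c ^ (n div (k+1))"
    if "is_solution \<alpha> \<beta> \<gamma> k x" "(\<Sum>i\<le>k. norm (x i - z)) = B" "B < r" for x B n
    using decay[OF D_def lt fp that(1) r_def c_def that(2,3)] .
  have stab: "\<forall>\<epsilon>>0. \<exists>\<delta>>0. \<forall>x. is_solution \<alpha> \<beta> \<gamma> k x \<and> (\<Sum>i\<le>k. norm (x i - z)) < \<delta>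
          \<longrightarrow> (\<forall>n. norm (x n - z) < \<epsilon>)"
  proof (intro allI impI)
    fix \<epsilon> :: real assume e: "\<epsilon> > 0"
    show "\<exists>\<delta>>0. \<forall>x. is_solution \<alpha> \<beta> \<gamma> k x \<and> (\<Sum>i\<le>k. norm (x i - z)) < \<delta>
          \<longrightarrow> (\<forall>n. norm (x n - z) < \<epsilon>)"
    proof (intro exI[of _ "min \<epsilon> r"] conjI allI impI)
      show "min \<epsilon> r > 0" using e rpos by simp
      fix x n assume h: "is_solution \<alpha> \<beta> \<gamma> k x \<and> (\<Sum>i\<le>k. norm (x i - z)) < min \<epsilon> r"
      define B where "B = (\<Sum>i\<le>k. norm (x i - z))"
      have B0: "B \<ge> 0" unfolding B_def by (simp add: sum_nonneg)
      have "norm (x n - z) \<le> B * c ^ (n div (k+1))" using bound[of x B n] h B_def by simp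
      also have "\<dots> \<le> B" using B0 c0 c1 by (simp add: mult_left_le power_le_one)
      finally show "norm (x n - z) < \<epsilon>" using h B_def by simp
    qed
  qed
  have lim0: "(\<lambda>n. c ^ (n div (k+1))) \<longlonglongrightarrow> 0"
  proof -
    have f: "filterlim (\<lambda>n::nat. n div (k+1)) sequentially sequentially"
      unfolding filterlim_at_top
    proof (intro allI)
      fix Z show "\<forall>\<^sub>F n in sequentially. Z \<le> n div (k + 1)"
        by (rule eventually_sequentiallyI[of "Z * (k+1)"])
           (metis div_le_mono div_mult_self_is_m zero_less_Suc Suc_eq_plus1)
    qed
    have "(\<lambda>n. c ^ n) \<longlonglongrightarrow> 0" using c0 c1 by (simp add: LIMSEQ_power_zero)
    from filterlim_compose[OF this f] show ?thesis by (simp add: o_def)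
  qed
  have conv: "\<exists>\<eta>>0. \<forall>x. is_solution \<alpha> \<beta> \<gamma> k x \<and> (\<Sum>i\<le>k. norm (x i - z)) < \<eta>
          \<longrightarrow> x \<longlonglongrightarrow> z"
  proof (intro exI[of _ r] conjI allI impI)
    show "r > 0" by (rule rpos)
    fix x assume h: "is_solution \<alpha> \<beta> \<gamma> k x \<and> (\<Sum>i\<le>k. norm (x i - z)) < r"
    define B where "B = (\<Sum>i\<le>k. norm (x i - z))"
    have "(\<lambda>n. x n - z) \<longlonglongrightarrow> 0"
    proof (rule Lim_null_comparison)
      show "\<forall>\<^sub>F n in sequentially. norm (x n - z) \<le> B * c ^ (n div (k+1))"
        using bound[of x B] h B_def by simp
      show "(\<lambda>n. B * c ^ (n div (k+1))) \<longlonglongrightarrow> 0"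
        using tendsto_mult_right_zero[OF lim0] by simp
    qed
    thus "x \<longlonglongrightarrow> z" by (simp add: LIM_zero_iff)
  qed
  show ?thesis using isfp stab conv unfolding locally_asymptotically_stable_def z_def[symmetric] by simp
qed

end
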